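(* Let $1\le r\le s\le t$ and let $u=ABCd$, $v=A'B'C'd'$ be vertices of $E3C(r,s,t)$ with $A=A'$, $B=B'$, $C\ne C'$ and $d\ne d'$. Then there exist $2r+2$ pairwise internally disjoint $u$–$v$ paths in $E3C(r,s,t)$, each of length at most $t+6$ if $\{d,d'\}=\{0,1\}$ or $\{d,d'\}=\{0,2\}$, and each of length at most $t+8$ if $\{d,d'\}=\{1,2\}$.
   Context: The exchanged 3-ary $n$-cube $E3C(r,s,t)$ ($r,s,t\ge1$, $n=r+s+t+1$): vertices are strings written $x=ABCd$ with $A\in\{0,1,2\}^r$, $B\in\{0,1,2\}^s$, $C\in\{0,1,2\}^t$, $d\in\{0,1,2\}$. Two distinct vertices $x=ABCd$, $y=A'B'C'd'$ are adjacent iff one of: (E0) $A=A',B=B',C=C'$ and $d\ne d'$; (E1) $d=d'=0$, $A=A'$, $B=B'$ and $C,C'$ differ in exactly one position; (E2) $d=d'=1$, $A=A'$, $C=C'$ and $B,B'$ differ in exactly one position; (E3) $d=d'=2$, $B=B'$, $C=C'$ and $A,A'$ differ in exactly one position. Paths are internally disjoint if they share no vertices other than their endpoints; length = number of edges. *)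

theory Defs
  imports Main
begin

type_synonym e3vert = "nat list \<times> nat list \<times> nat list \<times> nat"

definition tern_str :: "nat \<Rightarrow> nat list \<Rightarrow> bool" where
  "tern_str k X \<longleftrightarrow> length X = k \<and> (\<forall>a\<in>set X. a < 3)"

definition e3c_vert :: "nat \<Rightarrow> nat \<Rightarrow> nat \<Rightarrow> e3vert \<Rightarrow> bool" where
  "e3c_vert r s t x = (case x of (A,B,C,d) \<Rightarrow>
     tern_str r A \<and> tern_str s B \<and> tern_str t C \<and> d < 3)"

definition differ_one :: "nat list \<Rightarrow> nat list \<Rightarrow> bool" where
  "differ_one X Y \<longleftrightarrow> length X = length Y \<and>
     card {i. i < length X \<and> X ! i \<noteq> Y ! i} = 1"

definition e3c_adj :: "nat \<Rightarrow> nat \<Rightarrow> nat \<Rightarrow> e3vert \<Rightarrow> e3vert \<Rightarrow> bool" where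
  "e3c_adj r s t x y = (e3c_vert r s t x \<and> e3c_vert r s t y \<and> x \<noteq> y \<and>
     (case x of (A,B,C,d) \<Rightarrow> case y of (A',B',C',d') \<Rightarrow>
        (A = A' \<and> B = B' \<and> C = C' \<and> d \<noteq> d')
      \<or> (d = 0 \<and> d' = 0 \<and> A = A' \<and> B = B' \<and> differ_one C C')
      \<or> (d = 1 \<and> d' = 1 \<and> A = A' \<and> C = C' \<and> differ_one B B')
      \<or> (d = 2 \<and> d' = 2 \<and> B = B' \<and> C = C' \<and> differ_one A A')))"

definition e3c_path :: "nat \<Rightarrow> nat \<Rightarrow> nat \<Rightarrow> e3vert \<Rightarrow> e3vert \<Rightarrow> e3vert list \<Rightarrow> bool" where
  "e3c_path r s t u v p \<longleftrightarrow> p \<noteq> [] \<and> hd p = u \<and> last p = v \<and> distinct p \<and>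
     (\<forall>x\<in>set p. e3c_vert r s t x) \<and>
     (\<forall>i. Suc i < length p \<longrightarrow> e3c_adj r s t (p ! i) (p ! Suc i))"

definition path_len :: "'a list \<Rightarrow> nat" where
  "path_len p = length p - 1"

definition internally_disjoint :: "e3vert \<Rightarrow> e3vert \<Rightarrow> e3vert list list \<Rightarrow> bool" where
  "internally_disjoint u v ps \<longleftrightarrow> distinct ps \<and>
     (\<forall>i<length ps. \<forall>j<length ps. i \<noteq> j \<longrightarrow> set (ps ! i) \<inter> set (ps ! j) \<subseteq> {u, v})"

end

theory Submission
  imports Defs
begin


fun cw :: "nat list \<Rightarrow> nat list \<Rightarrow> nat list list" where
  "cw (x#xs) (y#ys) = (if x = y then map ((#) x) (cw xs ys) else map ((#) x) (cw xs ys) @ [y#ys])"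
| "cw xs ys = [xs]"

lemma cw_ne [simp]: "cw xs ys \<noteq> []"
  by (induction xs ys rule: cw.induct) auto

lemma cw_hd [simp]: "length xs = length ys \<Longrightarrow> hd (cw xs ys) = xs"
  by (induction xs ys rule: list_induct2) (auto simp: hd_append hd_map)

lemma cw_last [simp]: "length xs = length ys \<Longrightarrow> last (cw xs ys) = ys"
  by (induction xs ys rule: list_induct2) (auto simp: last_map)

lemma cw_len: "length (cw xs ys) \<le> length xs + 1"
  by (induction xs ys rule: cw.induct) auto

lemma cw_distinct: "distinct (cw xs ys)"
  by (induction xs ys rule: cw.induct) (auto simp: distinct_map inj_on_def)

lemma cw_set: "length xs = length ys \<Longrightarrow> Z \<in> set (cw xs ys) \<Longrightarrow> \<exists>k\<le>length xs. Z = take k xs @ drop k ys"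
proof (induction xs ys arbitrary: Z rule: list_induct2)
  case Nil
  then show ?case by auto
next
  case (Cons x xs y ys)
  show ?case
  proof (cases "Z = y # ys")
    case True
    then show ?thesis by (intro exI[of _ 0]) auto
  next
    case False
    then obtain Z' where Z: "Z = x # Z'" "Z' \<in> set (cw xs ys)"
      using Cons.prems by (auto split: if_splits)
    then obtain k where "k \<le> length xs" "Z' = take k xs @ drop k ys" using Cons.IH by blast
    then show ?thesis using Z by (intro exI[of _ "Suc k"]) auto
  qed
qed

lemma cw_set_len: "length xs = length ys \<Longrightarrow> Z \<in> set (cw xs ys) \<Longrightarrow> length Z = length xs"
  using cw_set by fastforce

lemma cw_set_nth: "length xs = length ys \<Longrightarrow> Z \<in> set (cw xs ys) \<Longrightarrow> j < length xs \<Longrightarrow> Z ! j = xs ! j \<or> Z ! j = ys ! j"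
  using cw_set by (fastforce simp: nth_append)

lemma tern_cw: "tern_str t X \<Longrightarrow> tern_str t Y \<Longrightarrow> Z \<in> set (cw X Y) \<Longrightarrow> tern_str t Z"
proof -
  assume a: "tern_str t X" "tern_str t Y" "Z \<in> set (cw X Y)"
  have l: "length X = t" "length Y = t" using a(1,2) unfolding tern_str_def by simp_all
  have lz: "length Z = t" using cw_set_len[of X Y Z] a(3) l by simp
  have "b < 3" if "b \<in> set Z" for b
  proof -
    obtain j where j: "j < length Z" "Z ! j = b" using \<open>b \<in> set Z\<close> by (auto simp: in_set_conv_nth)
    then have "b = X ! j \<or> b = Y ! j" using cw_set_nth[of X Y Z j] l lz a(3) by auto
    moreover have "X ! j \<in> set X" "Y ! j \<in> set Y" using j l lz by auto
    ultimately show ?thesis using a(1,2) unfolding tern_str_def by auto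
  qed
  then show ?thesis using lz unfolding tern_str_def by auto
qed

lemma differ_one_upd: "i < length X \<Longrightarrow> c \<noteq> X ! i \<Longrightarrow> differ_one X (X[i:=c])"
proof -
  assume a: "i < length X" "c \<noteq> X ! i"
  have "{j. j < length X \<and> X ! j \<noteq> X[i:=c] ! j} = {i}"
    using a by (auto simp: nth_list_update)
  then show ?thesis unfolding differ_one_def by simp
qed

lemma differ_one_D: "differ_one X Y \<Longrightarrow> \<exists>i<length X. Y ! i \<noteq> X ! i \<and> Y = X[i := Y ! i]"
proof -
  assume "differ_one X Y"
  then have l: "length X = length Y" and c: "card {j. j < length X \<and> X ! j \<noteq> Y ! j} = 1"
    unfolding differ_one_def by auto
  from c obtain i where S: "{j. j < length X \<and> X ! j \<noteq> Y ! j} = {i}" by (metis card_1_singletonE)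
  then have "i < length X" "X ! i \<noteq> Y ! i" by auto
  moreover have "Y = X[i := Y ! i]"
  proof (rule nth_equalityI)
    show "length Y = length (X[i := Y ! i])" using l by simp
  next
    fix j assume j: "j < length Y"
    show "Y ! j = X[i := Y ! i] ! j"
    proof (cases "j = i")
      case True
      then show ?thesis using j l by simp
    next
      case False
      then have "j \<notin> {j. j < length X \<and> X ! j \<noteq> Y ! j}" using S by blast
      then show ?thesis using False j l by simp
    qed
  qed
  ultimately show ?thesis by auto
qed

lemma differ_one_Cons: "differ_one a b \<Longrightarrow> differ_one (x#a) (x#b)"
proof -
  assume "differ_one a b"
  then obtain i where "i < length a" "b ! i \<noteq> a ! i" "b = a[i := b ! i]" using differ_one_D by blast
  then have "x # b = (x#a)[Suc i := b ! i]" by simp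
  then show ?thesis using differ_one_upd[of "Suc i" "x#a" "b ! i"] \<open>i < length a\<close> \<open>b ! i \<noteq> a ! i\<close> by simp
qed

lemma differ_one_head: "x \<noteq> y \<Longrightarrow> differ_one (x#ys) (y#ys)"
  using differ_one_upd[of 0 "x#ys" y] by simp

lemma differ_one_sym: "differ_one X Y \<Longrightarrow> differ_one Y X"
proof -
  assume a: "differ_one X Y"
  have "{i. i < length Y \<and> Y ! i \<noteq> X ! i} = {i. i < length X \<and> X ! i \<noteq> Y ! i}"
    using a unfolding differ_one_def by auto
  moreover have "length X = length Y" "card {i. i < length X \<and> X ! i \<noteq> Y ! i} = 1"
    using a unfolding differ_one_def by auto
  ultimately show ?thesis unfolding differ_one_def by simp
qed

lemma cw_succ: "length xs = length ys \<Longrightarrow> successively differ_one (cw xs ys)"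
proof (induction xs ys rule: list_induct2)
  case Nil
  then show ?case by simp
next
  case (Cons x xs y ys)
  have "successively differ_one (map ((#) x) (cw xs ys))"
    unfolding successively_map using Cons.IH by (rule successively_mono) (auto intro: differ_one_Cons)
  moreover have "last (map ((#) x) (cw xs ys)) = x # ys" using Cons.hyps by (simp add: last_map)
  ultimately show ?case
    by (auto simp: successively_append_iff differ_one_head)
qed

lemma cw_conflict:
  assumes "i < length X" "length X = length Y" "c \<noteq> X ! i" "X[i:=c] \<in> set (cw X Y)"
  shows "Y ! i = c \<and> (\<forall>j. i < j \<and> j < length X \<longrightarrow> X ! j = Y ! j)"
proof -
  obtain k where k: "k \<le> length X" "X[i:=c] = take k X @ drop k Y" using cw_set assms by blast
  have nth: "X[i:=c] ! j = (if j < k then X ! j else Y ! j)" if "j < length X" for j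
    using k that assms(2) by (simp add: nth_append min_def)
  have "\<not> i < k" using nth[of i] assms by auto
  have "Y ! i = c" using nth[of i] assms \<open>\<not> i < k\<close> by simp
  moreover have "X ! j = Y ! j" if "i < j" "j < length X" for j
  proof -
    have "\<not> j < k" using that \<open>\<not> i < k\<close> by simp
    then show ?thesis using nth[of j] that by simp
  qed
  ultimately show ?thesis by blast
qed



definition off :: "nat list \<Rightarrow> nat \<Rightarrow> nat \<Rightarrow> nat list" where
  "off X i e = X[i := (X ! i + e) mod 3]"

definition idxOf :: "nat list \<Rightarrow> nat list \<Rightarrow> nat \<times> nat" where
  "idxOf X Y = (let i = (LEAST i. X ! i \<noteq> Y ! i) in (i, (Y ! i + 3 - X ! i) mod 3))"

definition idxs :: "nat \<Rightarrow> (nat \<times> nat) list" where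
  "idxs r = concat (map (\<lambda>i. [(i,1),(i,2)]) [0..<r])"

lemma set_idxs: "set (idxs r) = {(i,e). i < r \<and> (e = 1 \<or> e = 2)}"
  unfolding idxs_def by auto

lemma distinct_idxs: "distinct (idxs r)"
  unfolding idxs_def by (induction r) auto

lemma length_idxs: "length (idxs r) = 2 * r"
  unfolding idxs_def by (induction r) auto

lemma tern_nth: "tern_str k X \<Longrightarrow> i < k \<Longrightarrow> X ! i < 3"
  unfolding tern_str_def by auto

lemma mod3a: "(x::nat) < 3 \<Longrightarrow> e = 1 \<or> e = 2 \<Longrightarrow> (x + e) mod 3 \<noteq> x"
  by presburger

lemma mod3b: "(x::nat) < 3 \<Longrightarrow> e = 1 \<or> e = 2 \<Longrightarrow> ((x + e) mod 3 + 3 - x) mod 3 = e"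
proof -
  assume "x < 3" "e = 1 \<or> e = 2"
  then have "x = 0 \<or> x = 1 \<or> x = 2" by auto
  then show ?thesis using \<open>e = 1 \<or> e = 2\<close> by (elim disjE) simp_all
qed

lemma off_neq_nth: "(X::nat list) ! i < 3 \<Longrightarrow> e = 1 \<or> e = 2 \<Longrightarrow> (X ! i + e) mod 3 \<noteq> X ! i"
  by (rule mod3a)

lemma off_ne: "tern_str k X \<Longrightarrow> i < k \<Longrightarrow> e = 1 \<or> e = 2 \<Longrightarrow> off X i e \<noteq> X"
proof
  assume a: "tern_str k X" "i < k" "e = 1 \<or> e = 2" "off X i e = X"
  then have "length X = k" unfolding tern_str_def by simp
  then have "off X i e ! i = (X ! i + e) mod 3" using a(2) unfolding off_def by simp
  then show False using a off_neq_nth[of X i e] tern_nth[of k X i] by simp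
qed

lemma tern_off: "tern_str k X \<Longrightarrow> tern_str k (off X i e)"
  unfolding tern_str_def off_def
  using set_update_subset_insert by fastforce

lemma len_off [simp]: "length (off X i e) = length X"
  unfolding off_def by simp

lemma idxOf_off:
  assumes "tern_str k X" "i < k" "e = 1 \<or> e = 2"
  shows "idxOf X (off X i e) = (i, e)"
proof -
  have l: "length X = k" using assms unfolding tern_str_def by simp
  have xi: "X ! i < 3" using tern_nth assms by blast
  have neq: "X ! j \<noteq> off X i e ! j \<longleftrightarrow> j = i" for j
  proof (cases "j = i")
    case True
    then show ?thesis using off_neq_nth[OF xi assms(3)] l assms(2) unfolding off_def by simp
  next
    case False
    then show ?thesis unfolding off_def by simp
  qed
  have "(LEAST j. X ! j \<noteq> off X i e ! j) = i" using neq by (intro Least_equality) auto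
  moreover have "off X i e ! i = (X ! i + e) mod 3" using l assms(2) unfolding off_def by simp
  moreover have "((X ! i + e) mod 3 + 3 - X ! i) mod 3 = e" using xi assms(3) by (rule mod3b)
  ultimately show ?thesis unfolding idxOf_def Let_def by simp
qed

lemma off_inj:
  assumes "tern_str k X" "i < k" "e = 1 \<or> e = 2" "i' < k" "e' = 1 \<or> e' = 2" "off X i e = off X i' e'"
  shows "i = i' \<and> e = e'"
proof -
  have "(i, e) = idxOf X (off X i e)" using idxOf_off[OF assms(1-3)] by simp
  also have "\<dots> = idxOf X (off X i' e')" using assms(6) by (rule arg_cong)
  also have "\<dots> = (i', e')" using idxOf_off[OF assms(1,4,5)] by simp
  finally show ?thesis by simp
qed

lemma adj_layer:
  "e3c_vert r s t (A,B,C,d) \<Longrightarrow> d' < 3 \<Longrightarrow> d \<noteq> d' \<Longrightarrow> e3c_adj r s t (A,B,C,d) (A,B,C,d')"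
  unfolding e3c_adj_def e3c_vert_def by simp

lemma adj_C:
  "e3c_vert r s t (A,B,X,0) \<Longrightarrow> e3c_vert r s t (A,B,Y,0) \<Longrightarrow> differ_one X Y \<Longrightarrow>
   e3c_adj r s t (A,B,X,0) (A,B,Y,0)"
  unfolding e3c_adj_def differ_one_def by auto

lemma adj_B:
  "e3c_vert r s t (A,X,C,1) \<Longrightarrow> e3c_vert r s t (A,Y,C,1) \<Longrightarrow> differ_one X Y \<Longrightarrow>
   e3c_adj r s t (A,X,C,1) (A,Y,C,1)"
  unfolding e3c_adj_def differ_one_def by auto

lemma adj_A:
  "e3c_vert r s t (X,B,C,2) \<Longrightarrow> e3c_vert r s t (Y,B,C,2) \<Longrightarrow> differ_one X Y \<Longrightarrow>
   e3c_adj r s t (X,B,C,2) (Y,B,C,2)"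
  unfolding e3c_adj_def differ_one_def by auto

lemma differ_one_off: "tern_str k X \<Longrightarrow> i < k \<Longrightarrow> e = 1 \<or> e = 2 \<Longrightarrow> differ_one X (off X i e)"
proof -
  assume a: "tern_str k X" "i < k" "e = 1 \<or> e = 2"
  have "i < length X" using a unfolding tern_str_def by simp
  moreover have "(X ! i + e) mod 3 \<noteq> X ! i" using off_neq_nth[OF tern_nth[OF a(1,2)] a(3)] .
  ultimately show ?thesis unfolding off_def by (rule differ_one_upd)
qed

lemma adj_sym: "e3c_adj r s t x y \<Longrightarrow> e3c_adj r s t y x"
  unfolding e3c_adj_def by (auto split: prod.splits dest: differ_one_sym)

lemma walk_adj:
  assumes "tern_str r A" "tern_str s B" "tern_str t X" "tern_str t Y"
  shows "successively (e3c_adj r s t) (map (\<lambda>Z. (A,B,Z,0)) (cw X Y))"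
proof -
  have l: "length X = length Y" using assms unfolding tern_str_def by simp
  show ?thesis
    unfolding successively_map
  proof (rule successively_mono[OF cw_succ[OF l]])
    fix x y assume "x \<in> set (cw X Y)" "y \<in> set (cw X Y)" "differ_one x y"
    then show "e3c_adj r s t (A, B, x, 0) (A, B, y, 0)"
      using tern_cw[OF assms(3,4)] assms(1,2) by (intro adj_C) (auto simp: e3c_vert_def)
  qed
qed

lemma adj_vert: "e3c_adj r s t x y \<Longrightarrow> e3c_vert r s t x \<and> e3c_vert r s t y"
  unfolding e3c_adj_def by blast

lemma path_intro:
  assumes "length p \<ge> 2" "hd p = u" "last p = v" "distinct p" "successively (e3c_adj r s t) p"
  shows "e3c_path r s t u v p"
proof -
  have adj: "\<forall>i. Suc i < length p \<longrightarrow> e3c_adj r s t (p ! i) (p ! Suc i)"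
    using assms(5) by (simp only: successively_conv_nth)
  have V: "e3c_vert r s t x" if xp: "x \<in> set p" for x
  proof -
    obtain i where i: "i < length p" "p ! i = x" using xp[unfolded in_set_conv_nth] by blast
    show ?thesis
    proof (cases "Suc i < length p")
      case True
      then have "e3c_adj r s t (p ! i) (p ! Suc i)" using adj by blast
      then show ?thesis using adj_vert i by blast
    next
      case False
      then have j: "Suc (i - 1) < length p" "Suc (i - 1) = i" using i assms(1) by auto
      then have "e3c_adj r s t (p ! (i - 1)) (p ! Suc (i - 1))" using adj by blast
      then show ?thesis using adj_vert i j by metis
    qed
  qed
  have ne: "p \<noteq> []" using assms(1) by auto
  show ?thesis unfolding e3c_path_def
    using ne assms(2,3,4) V adj by blast
qed

lemma path_rev: "e3c_path r s t u v p \<Longrightarrow> e3c_path r s t v u (rev p)"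
proof -
  assume a: "e3c_path r s t u v p"
  then have "successively (e3c_adj r s t) p" unfolding e3c_path_def successively_conv_nth by blast
  then have "successively (e3c_adj r s t) (rev p)"
    by (simp add: successively_mono adj_sym)
  then show ?thesis using a unfolding e3c_path_def successively_conv_nth
    by (auto simp: hd_rev last_rev)
qed

lemma family:
  fixes pth :: "nat \<times> nat \<Rightarrow> e3vert list" and lab :: "e3vert \<Rightarrow> nat \<times> nat"
  assumes "distinct ks"
    and P: "\<And>k. k \<in> set ks \<Longrightarrow> e3c_path r s t u v (pth k) \<and> path_len (pth k) \<le> L"
    and L: "\<And>k x. k \<in> set ks \<Longrightarrow> x \<in> set (pth k) \<Longrightarrow> x \<noteq> u \<Longrightarrow> x \<noteq> v \<Longrightarrow> lab x = k"
    and N: "\<And>k. k \<in> set ks \<Longrightarrow> \<exists>x\<in>set (pth k). x \<noteq> u \<and> x \<noteq> v"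
  shows "internally_disjoint u v (map pth ks) \<and>
     (\<forall>p\<in>set (map pth ks). e3c_path r s t u v p \<and> path_len p \<le> L)"
proof -
  have inj: "inj_on pth (set ks)"
  proof (rule inj_onI)
    fix k k' assume "k \<in> set ks" "k' \<in> set ks" "pth k = pth k'"
    then obtain x where "x \<in> set (pth k)" "x \<noteq> u" "x \<noteq> v" using N by blast
    then show "k = k'" using L \<open>k \<in> set ks\<close> \<open>k' \<in> set ks\<close> \<open>pth k = pth k'\<close> by metis
  qed
  have "set (pth (ks ! i)) \<inter> set (pth (ks ! j)) \<subseteq> {u, v}"
    if "i < length ks" "j < length ks" "i \<noteq> j" for i j
  proof
    fix x assume x: "x \<in> set (pth (ks ! i)) \<inter> set (pth (ks ! j))"
    have ne: "ks ! i \<noteq> ks ! j" using assms(1) that by (simp add: nth_eq_iff_index_eq)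
    show "x \<in> {u, v}"
    proof (rule ccontr)
      assume "x \<notin> {u, v}"
      then have "lab x = ks ! i" "lab x = ks ! j" using L x that by auto
      then show False using ne by simp
    qed
  qed
  then show ?thesis unfolding internally_disjoint_def using assms(1) inj P
    by (auto simp: distinct_map)
qed



lemma vert_iff [simp]: "e3c_vert r s t (X,Y,Z,d) \<longleftrightarrow> tern_str r X \<and> tern_str s Y \<and> tern_str t Z \<and> d < 3"
  unfolding e3c_vert_def by simp

lemma inj_wk [simp]: "inj_on (\<lambda>Z. (X,Y,Z,d)) S"
  by (auto simp: inj_on_def)

lemma tern_len: "tern_str k X \<Longrightarrow> length X = k"
  unfolding tern_str_def by simp

lemma cw_len2: "tern_str t X \<Longrightarrow> length (cw X Y) \<le> t + 1"
  using cw_len[of X Y] tern_len by fastforce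

lemma walk_hd [simp]: "length X = length Y \<Longrightarrow> hd (map (\<lambda>Z. (P,Q,Z,d)) (cw X Y)) = (P,Q,X,d)"
  by (simp add: hd_map)

lemma walk_last [simp]: "length X = length Y \<Longrightarrow> last (map (\<lambda>Z. (P,Q,Z,d)) (cw X Y)) = (P,Q,Y,d)"
  by (simp add: last_map)

lemma C_in_cw: "length X = length Y \<Longrightarrow> X \<in> set (cw X Y)"
  using hd_in_set[OF cw_ne, of X Y] by simp

lemma C'_in_cw: "length X = length Y \<Longrightarrow> Y \<in> set (cw X Y)"
  using last_in_set[OF cw_ne, of X Y] by simp

lemma case02:
  fixes A B C C' :: "nat list"
  assumes r1: "1 \<le> r" "r \<le> s" "s \<le> t"
    and tA: "tern_str r A" and tB: "tern_str s B" and tC: "tern_str t C" and tC': "tern_str t C'"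
    and CC: "C \<noteq> C'"
    and k0: "i0 < r" "e0 = 1 \<or> e0 = 2"
    and cf: "\<And>i e. i < r \<Longrightarrow> e = 1 \<or> e = 2 \<Longrightarrow> off C i e \<in> set (cw C C') \<Longrightarrow> i = i0 \<and> e = e0"
  shows "\<exists>ps. length ps = 2*r+2 \<and> internally_disjoint (A,B,C,0) (A,B,C',2) ps \<and>
     (\<forall>p\<in>set ps. e3c_path r s t (A,B,C,0) (A,B,C',2) p \<and> path_len p \<le> t+6)"
proof -
  define u where "u = (A,B,C,0::nat)"
  define v where "v = (A,B,C',2::nat)"
  define W where "W = cw C C'"
  define Aq where "Aq = off A i0 e0"
  define Br where "Br = off B 0 1"
  define E1 where "E1 = map (\<lambda>Z. (A,B,Z,0::nat)) W @ [v]"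
  define Q where "Q = [u, (A,B,C,2), (Aq,B,C,2)] @ map (\<lambda>Z. (Aq,B,Z,0::nat)) W @ [(Aq,B,C',2), v]"
  define R where "R = [u, (A,B,C,1), (A,Br,C,1)] @ map (\<lambda>Z. (A,Br,Z,0::nat)) W @ [(A,Br,C',1), (A,B,C',1), v]"
  define Pp where "Pp = (\<lambda>i e. [u, (A,B,off C i e,0), (A,B,off C i e,2), (off A i e,B,off C i e,2)]
      @ map (\<lambda>Z. (off A i e,B,Z,0::nat)) (cw (off C i e) C') @ [(off A i e,B,C',2), v])"
  define pth where "pth = (\<lambda>k. if k = (0,0) then E1 else if k = (0,3) then R else if k = (i0,e0) then Q
      else Pp (fst k) (snd k))"
  define ks where "ks = (0,0) # (0,3) # (i0,e0) # remove1 (i0,e0) (idxs r)"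
  define lab :: "e3vert \<Rightarrow> nat \<times> nat" where "lab = (\<lambda>(X,Y,Z,d). if Y \<noteq> B then (0,3) else if X \<noteq> A then idxOf A X
      else if d = 1 then (0,3) else if d = 2 then (if Z = C then (i0,e0) else idxOf C Z)
      else if Z \<in> set W then (0,0) else idxOf C Z)"
  have lC: "length C = t" "length C' = t" using tC tC' tern_len by auto
  have lCC: "length C = length C'" using lC by simp
  have rt: "r \<le> t" "0 < s" using r1 by auto
  have tAq: "tern_str r Aq" unfolding Aq_def using tA by (rule tern_off)
  have tBr: "tern_str s Br" unfolding Br_def using tB by (rule tern_off)
  have AqA: "Aq \<noteq> A" "A \<noteq> Aq" unfolding Aq_def using off_ne[OF tA k0] by auto
  have BrB: "Br \<noteq> B" "B \<noteq> Br" unfolding Br_def using off_ne[OF tB rt(2), of 1] by auto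
  have dA: "differ_one A Aq" "differ_one Aq A" unfolding Aq_def using differ_one_off[OF tA k0]
    by (auto intro: differ_one_sym)
  have dB: "differ_one B Br" "differ_one Br B" unfolding Br_def using differ_one_off[OF tB rt(2), of 1]
    by (auto intro: differ_one_sym)
  have CC2: "C' \<noteq> C" using CC by simp
  have tW: "tern_str t Z" if "Z \<in> set W" for Z using tern_cw[OF tC tC'] that unfolding W_def by blast
  have WC: "C \<in> set W" "C' \<in> set W" unfolding W_def using C_in_cw[OF lCC] C'_in_cw[OF lCC] by auto
  have lenW: "length W \<le> t + 1" unfolding W_def using cw_len2[OF tC] .
  have dW: "distinct W" unfolding W_def by (rule cw_distinct)
  have labAq: "idxOf A Aq = (i0,e0)" unfolding Aq_def using idxOf_off[OF tA k0] .
  have labBr: "lab (X, Br, Z, d) = (0,3)" for X Z d unfolding lab_def using BrB by simp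

  have E1p: "e3c_path r s t u v E1 \<and> path_len E1 \<le> t + 6"
  proof
    have "successively (e3c_adj r s t) (map (\<lambda>Z. (A,B,Z,0::nat)) W)"
      unfolding W_def using walk_adj[OF tA tB tC tC'] .
    moreover have "e3c_adj r s t (A,B,C',0) v" unfolding v_def using tA tB tC' by (intro adj_layer) auto
    ultimately have "successively (e3c_adj r s t) E1"
      unfolding E1_def W_def using lCC by (simp add: successively_append_iff successively_Cons hd_append)
    moreover have "distinct E1" unfolding E1_def v_def using dW by (auto simp: distinct_map)
    moreover have "hd E1 = u" "last E1 = v" unfolding E1_def u_def W_def using lCC by (simp_all add: hd_append)
    moreover have "length E1 \<ge> 2" unfolding E1_def W_def by (simp add: Suc_le_eq)
    ultimately show "e3c_path r s t u v E1" by (intro path_intro) auto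
    show "path_len E1 \<le> t + 6" unfolding path_len_def E1_def using lenW by simp
  qed
  have E1l: "lab x = (0,0)" if "x \<in> set E1" "x \<noteq> u" "x \<noteq> v" for x
    using that unfolding E1_def lab_def by auto
  have E1n: "\<exists>x\<in>set E1. x \<noteq> u \<and> x \<noteq> v"
    using WC CC unfolding E1_def u_def v_def by force

  have Qp: "e3c_path r s t u v Q \<and> path_len Q \<le> t + 6"
  proof
    have w: "successively (e3c_adj r s t) (map (\<lambda>Z. (Aq,B,Z,0::nat)) W)"
      unfolding W_def using walk_adj[OF tAq tB tC tC'] .
    have a1: "e3c_adj r s t u (A,B,C,2)" unfolding u_def using tA tB tC by (intro adj_layer) auto
    have a2: "e3c_adj r s t (A,B,C,2) (Aq,B,C,2)" using tA tAq tB tC dA by (intro adj_A) auto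
    have a3: "e3c_adj r s t (Aq,B,C,2) (Aq,B,C,0)" using tAq tB tC by (intro adj_layer) auto
    have a4: "e3c_adj r s t (Aq,B,C',0) (Aq,B,C',2)" using tAq tB tC' by (intro adj_layer) auto
    have a5: "e3c_adj r s t (Aq,B,C',2) v" unfolding v_def using tA tAq tB tC' dA by (intro adj_A) auto
    have "successively (e3c_adj r s t) Q"
      unfolding Q_def using w a1 a2 a3 a4 a5 lCC unfolding W_def by (simp add: successively_append_iff successively_Cons hd_append)
    moreover have "distinct Q" unfolding Q_def u_def v_def using dW AqA CC CC2 WC by (auto simp: distinct_map)
    moreover have "hd Q = u" "last Q = v" unfolding Q_def by simp_all
    moreover have "length Q \<ge> 2" unfolding Q_def by simp
    ultimately show "e3c_path r s t u v Q" by (intro path_intro) auto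
    show "path_len Q \<le> t + 6" unfolding path_len_def Q_def using lenW by simp
  qed
  have Ql: "lab x = (i0,e0)" if "x \<in> set Q" "x \<noteq> u" "x \<noteq> v" for x
    using that AqA labAq unfolding Q_def lab_def by auto
  have Qn: "\<exists>x\<in>set Q. x \<noteq> u \<and> x \<noteq> v"
    unfolding Q_def u_def v_def using CC by force

  have Rp: "e3c_path r s t u v R \<and> path_len R \<le> t + 6"
  proof
    have w: "successively (e3c_adj r s t) (map (\<lambda>Z. (A,Br,Z,0::nat)) W)"
      unfolding W_def using walk_adj[OF tA tBr tC tC'] .
    have a1: "e3c_adj r s t u (A,B,C,1)" unfolding u_def using tA tB tC by (intro adj_layer) auto
    have a2: "e3c_adj r s t (A,B,C,1) (A,Br,C,1)" using tA tBr tB tC dB by (intro adj_B) auto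
    have a3: "e3c_adj r s t (A,Br,C,1) (A,Br,C,0)" using tA tBr tC by (intro adj_layer) auto
    have a4: "e3c_adj r s t (A,Br,C',0) (A,Br,C',1)" using tA tBr tC' by (intro adj_layer) auto
    have a5: "e3c_adj r s t (A,Br,C',1) (A,B,C',1)" using tA tBr tB tC' dB by (intro adj_B) auto
    have a6: "e3c_adj r s t (A,B,C',1) v" unfolding v_def using tA tB tC' by (intro adj_layer) auto
    have "successively (e3c_adj r s t) R"
      unfolding R_def using w a1 a2 a3 a4 a5 a6 lCC unfolding W_def by (simp add: successively_append_iff successively_Cons hd_append)
    moreover have "distinct R" unfolding R_def u_def v_def using dW BrB CC CC2 WC by (auto simp: distinct_map)
    moreover have "hd R = u" "last R = v" unfolding R_def by simp_all
    moreover have "length R \<ge> 2" unfolding R_def by simp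
    ultimately show "e3c_path r s t u v R" by (intro path_intro) auto
    show "path_len R \<le> t + 6" unfolding path_len_def R_def using lenW by simp
  qed
  have Rl: "lab x = (0,3)" if "x \<in> set R" "x \<noteq> u" "x \<noteq> v" for x
    using that BrB unfolding R_def lab_def by auto
  have Rn: "\<exists>x\<in>set R. x \<noteq> u \<and> x \<noteq> v"
    unfolding R_def u_def v_def by force

  have Pall: "(e3c_path r s t u v (Pp i e) \<and> path_len (Pp i e) \<le> t + 6) \<and>
      (\<forall>x\<in>set (Pp i e). x \<noteq> u \<longrightarrow> x \<noteq> v \<longrightarrow> lab x = (i,e)) \<and>
      (\<exists>x\<in>set (Pp i e). x \<noteq> u \<and> x \<noteq> v)"
    if ie: "i < r" "e = 1 \<or> e = 2" "(i,e) \<noteq> (i0,e0)" for i e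
  proof -
    define Ck where "Ck = off C i e"
    define Ak where "Ak = off A i e"
    define Wk where "Wk = cw Ck C'"
    have it: "i < t" using ie rt by simp
    have tCk: "tern_str t Ck" unfolding Ck_def using tC by (rule tern_off)
    have tAk: "tern_str r Ak" unfolding Ak_def using tA by (rule tern_off)
    have lCk: "length Ck = length C'" using tCk tC' tern_len by metis
    have CkC: "Ck \<noteq> C" "C \<noteq> Ck" unfolding Ck_def using off_ne[OF tC it ie(2)] by auto
    have AkA: "Ak \<noteq> A" "A \<noteq> Ak" unfolding Ak_def using off_ne[OF tA ie(1,2)] by auto
    have CkW: "Ck \<notin> set W" unfolding Ck_def W_def using cf[OF ie(1,2)] ie(3) by blast
    have CkC': "Ck \<noteq> C'" "C' \<noteq> Ck" using CkW WC by auto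
    have dAk: "differ_one A Ak" "differ_one Ak A" unfolding Ak_def using differ_one_off[OF tA ie(1,2)]
      by (auto intro: differ_one_sym)
    have dCk: "differ_one C Ck" unfolding Ck_def using differ_one_off[OF tC it ie(2)] .
    have labAk: "idxOf A Ak = (i,e)" unfolding Ak_def using idxOf_off[OF tA ie(1,2)] .
    have labCk: "idxOf C Ck = (i,e)" unfolding Ck_def using idxOf_off[OF tC it ie(2)] .
    have PP: "Pp i e = [u, (A,B,Ck,0), (A,B,Ck,2), (Ak,B,Ck,2)]
      @ map (\<lambda>Z. (Ak,B,Z,0::nat)) Wk @ [(Ak,B,C',2), v]"
      unfolding Pp_def Ck_def Ak_def Wk_def by simp
    have lenWk: "length Wk \<le> t + 1" unfolding Wk_def using cw_len2[OF tCk] .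
    have dWk: "distinct Wk" unfolding Wk_def by (rule cw_distinct)
    have p1: "e3c_path r s t u v (Pp i e)"
    proof -
      have w: "successively (e3c_adj r s t) (map (\<lambda>Z. (Ak,B,Z,0::nat)) Wk)"
        unfolding Wk_def using walk_adj[OF tAk tB tCk tC'] .
      have a1: "e3c_adj r s t u (A,B,Ck,0)" unfolding u_def using tA tB tC tCk dCk by (intro adj_C) auto
      have a2: "e3c_adj r s t (A,B,Ck,0) (A,B,Ck,2)" using tA tB tCk by (intro adj_layer) auto
      have a3: "e3c_adj r s t (A,B,Ck,2) (Ak,B,Ck,2)" using tA tAk tB tCk dAk by (intro adj_A) auto
      have a4: "e3c_adj r s t (Ak,B,Ck,2) (Ak,B,Ck,0)" using tAk tB tCk by (intro adj_layer) auto
      have a5: "e3c_adj r s t (Ak,B,C',0) (Ak,B,C',2)" using tAk tB tC' by (intro adj_layer) auto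
      have a6: "e3c_adj r s t (Ak,B,C',2) v" unfolding v_def using tA tAk tB tC' dAk by (intro adj_A) auto
      have "successively (e3c_adj r s t) (Pp i e)"
        unfolding PP using w a1 a2 a3 a4 a5 a6 lCk unfolding Wk_def by (simp add: successively_append_iff successively_Cons hd_append)
      moreover have "distinct (Pp i e)" unfolding PP u_def v_def using dWk AkA CkC CkC' CC CC2
        by (auto simp: distinct_map)
      moreover have "hd (Pp i e) = u" "last (Pp i e) = v" unfolding PP by simp_all
      moreover have "length (Pp i e) \<ge> 2" unfolding PP by simp
      ultimately show ?thesis by (intro path_intro) auto
    qed
    have p2: "path_len (Pp i e) \<le> t + 6" unfolding path_len_def PP using lenWk by simp
    have p3: "\<forall>x\<in>set (Pp i e). x \<noteq> u \<longrightarrow> x \<noteq> v \<longrightarrow> lab x = (i,e)"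
      unfolding PP lab_def using AkA CkC CkW labAk labCk by auto
    have p4: "\<exists>x\<in>set (Pp i e). x \<noteq> u \<and> x \<noteq> v"
      unfolding PP u_def v_def using CkC by force
    show ?thesis using p1 p2 p3 p4 by blast
  qed
  have k0s: "(i0,e0) \<in> set (idxs r)" using k0 by (auto simp: set_idxs)
  have rem: "set (remove1 (i0,e0) (idxs r)) = set (idxs r) - {(i0,e0)}"
    using distinct_idxs by (rule set_remove1_eq)
  have dks: "distinct ks" unfolding ks_def using rem k0 distinct_idxs
    by (auto simp: set_idxs)
  have lks: "length ks = 2*r+2" unfolding ks_def using k0s r1 by (simp add: length_remove1 length_idxs)
  have main: "internally_disjoint u v (map pth ks) \<and>
     (\<forall>p\<in>set (map pth ks). e3c_path r s t u v p \<and> path_len p \<le> t+6)"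
  proof (rule family[where lab = lab])
    show "distinct ks" by (rule dks)
  next
    fix k assume k: "k \<in> set ks"
    show "e3c_path r s t u v (pth k) \<and> path_len (pth k) \<le> t + 6"
    proof -
      consider "k = (0,0)" | "k = (0,3)" | "k = (i0,e0)" | "k \<in> set (idxs r)" "k \<noteq> (i0,e0)"
        using k rem unfolding ks_def by auto
      then show ?thesis
      proof cases
        case 4
        then obtain i e where "k = (i,e)" "i < r" "e = 1 \<or> e = 2" "(i,e) \<noteq> (i0,e0)" by (auto simp: set_idxs)
        then show ?thesis using Pall[of i e] unfolding pth_def by auto
      qed (use E1p Rp Qp k0 in \<open>auto simp: pth_def\<close>)
    qed
  next
    fix k x assume k: "k \<in> set ks" and x: "x \<in> set (pth k)" "x \<noteq> u" "x \<noteq> v"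
    consider "k = (0,0)" | "k = (0,3)" | "k = (i0,e0)" | "k \<in> set (idxs r)" "k \<noteq> (i0,e0)"
      using k rem unfolding ks_def by auto
    then show "lab x = k"
    proof cases
      case 1 then show ?thesis using E1l x unfolding pth_def by auto
    next
      case 2 then show ?thesis using Rl x unfolding pth_def by auto
    next
      case 3
      then have "pth k = Q" using k0 unfolding pth_def by auto
      then show ?thesis using Ql[of x] x 3 by simp
    next
      case 4
      then obtain i e where "k = (i,e)" "i < r" "e = 1 \<or> e = 2" "(i,e) \<noteq> (i0,e0)" by (auto simp: set_idxs)
      then show ?thesis using Pall[of i e] x unfolding pth_def by auto
    qed
  next
    fix k assume k: "k \<in> set ks"
    consider "k = (0,0)" | "k = (0,3)" | "k = (i0,e0)" | "k \<in> set (idxs r)" "k \<noteq> (i0,e0)"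
      using k rem unfolding ks_def by auto
    then show "\<exists>x\<in>set (pth k). x \<noteq> u \<and> x \<noteq> v"
    proof cases
      case 4
      then obtain i e where "k = (i,e)" "i < r" "e = 1 \<or> e = 2" "(i,e) \<noteq> (i0,e0)" by (auto simp: set_idxs)
      then show ?thesis using Pall[of i e] unfolding pth_def by auto
    qed (use E1n Rn Qn k0 in \<open>auto simp: pth_def\<close>)
  qed
  show ?thesis using main lks unfolding u_def v_def by (intro exI[of _ "map pth ks"]) simp
qed

lemma case01:
  fixes A B C C' :: "nat list"
  assumes r1: "1 \<le> r" "r \<le> s" "s \<le> t"
    and tA: "tern_str r A" and tB: "tern_str s B" and tC: "tern_str t C" and tC': "tern_str t C'"
    and CC: "C \<noteq> C'"
    and k0: "i0 < r" "e0 = 1 \<or> e0 = 2"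
    and cf: "\<And>i e. i < r \<Longrightarrow> e = 1 \<or> e = 2 \<Longrightarrow> off C i e \<in> set (cw C C') \<Longrightarrow> i = i0 \<and> e = e0"
  shows "\<exists>ps. length ps = 2*r+2 \<and> internally_disjoint (A,B,C,0) (A,B,C',1) ps \<and>
     (\<forall>p\<in>set ps. e3c_path r s t (A,B,C,0) (A,B,C',1) p \<and> path_len p \<le> t+6)"
proof -
  define u where "u = (A,B,C,0::nat)"
  define v where "v = (A,B,C',1::nat)"
  define W where "W = cw C C'"
  define Aq where "Aq = off B i0 e0"
  define Br where "Br = off A 0 1"
  define E1 where "E1 = map (\<lambda>Z. (A,B,Z,0::nat)) W @ [v]"
  define Q where "Q = [u, (A,B,C,1), (A,Aq,C,1)] @ map (\<lambda>Z. (A,Aq,Z,0::nat)) W @ [(A,Aq,C',1), v]"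
  define R where "R = [u, (A,B,C,2), (Br,B,C,2)] @ map (\<lambda>Z. (Br,B,Z,0::nat)) W @ [(Br,B,C',2), (A,B,C',2), v]"
  define Pp where "Pp = (\<lambda>i e. [u, (A,B,off C i e,0), (A,B,off C i e,1), (A,off B i e,off C i e,1)]
      @ map (\<lambda>Z. (A,off B i e,Z,0::nat)) (cw (off C i e) C') @ [(A,off B i e,C',1), v])"
  define pth where "pth = (\<lambda>k. if k = (0,0) then E1 else if k = (0,3) then R else if k = (i0,e0) then Q
      else Pp (fst k) (snd k))"
  define ks where "ks = (0,0) # (0,3) # (i0,e0) # remove1 (i0,e0) (idxs r)"
  define lab :: "e3vert \<Rightarrow> nat \<times> nat" where "lab = (\<lambda>(X,Y,Z,d). if X \<noteq> A then (0,3) else if Y \<noteq> B then idxOf B Y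
      else if d = 2 then (0,3) else if d = 1 then (if Z = C then (i0,e0) else idxOf C Z) else if d = 2 then (if Z = C then (i0,e0) else idxOf C Z)
      else if Z \<in> set W then (0,0) else idxOf C Z)"
  have lC: "length C = t" "length C' = t" using tC tC' tern_len by auto
  have lCC: "length C = length C'" using lC by simp
  have rt: "r \<le> t" "0 < r" "i0 < s" using r1 k0 by auto
  have tAq: "tern_str s Aq" unfolding Aq_def using tB by (rule tern_off)
  have tBr: "tern_str r Br" unfolding Br_def using tA by (rule tern_off)
  have AqA: "Aq \<noteq> B" "B \<noteq> Aq" unfolding Aq_def using off_ne[OF tB rt(3) k0(2)] by auto
  have BrB: "Br \<noteq> A" "A \<noteq> Br" unfolding Br_def using off_ne[OF tA rt(2), of 1] by auto
  have dA: "differ_one B Aq" "differ_one Aq B" unfolding Aq_def using differ_one_off[OF tB rt(3) k0(2)]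
    by (auto intro: differ_one_sym)
  have dB: "differ_one A Br" "differ_one Br A" unfolding Br_def using differ_one_off[OF tA rt(2), of 1]
    by (auto intro: differ_one_sym)
  have CC2: "C' \<noteq> C" using CC by simp
  have WC: "C \<in> set W" "C' \<in> set W" unfolding W_def using C_in_cw[OF lCC] C'_in_cw[OF lCC] by auto
  have lenW: "length W \<le> t + 1" unfolding W_def using cw_len2[OF tC] .
  have dW: "distinct W" unfolding W_def by (rule cw_distinct)
  have labAq: "idxOf B Aq = (i0,e0)" unfolding Aq_def using idxOf_off[OF tB rt(3) k0(2)] .

  have E1p: "e3c_path r s t u v E1 \<and> path_len E1 \<le> t + 6"
  proof
    have "successively (e3c_adj r s t) (map (\<lambda>Z. (A,B,Z,0::nat)) W)"
      unfolding W_def using walk_adj[OF tA tB tC tC'] .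
    moreover have "e3c_adj r s t (A,B,C',0) v" unfolding v_def using tA tB tC' by (intro adj_layer) auto
    ultimately have "successively (e3c_adj r s t) E1"
      unfolding E1_def W_def using lCC by (simp add: successively_append_iff)
    moreover have "distinct E1" unfolding E1_def v_def using dW by (auto simp: distinct_map)
    moreover have "hd E1 = u" "last E1 = v" unfolding E1_def u_def W_def using lCC by (simp_all add: hd_append)
    moreover have "length E1 \<ge> 2" unfolding E1_def W_def by (simp add: Suc_le_eq)
    ultimately show "e3c_path r s t u v E1" by (intro path_intro) auto
    show "path_len E1 \<le> t + 6" unfolding path_len_def E1_def using lenW by simp
  qed
  have E1l: "lab x = (0,0)" if "x \<in> set E1" "x \<noteq> u" "x \<noteq> v" for x
    using that unfolding E1_def lab_def by auto
  have E1n: "\<exists>x\<in>set E1. x \<noteq> u \<and> x \<noteq> v"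
    using WC CC unfolding E1_def u_def v_def by force

  have Qp: "e3c_path r s t u v Q \<and> path_len Q \<le> t + 6"
  proof
    have w: "successively (e3c_adj r s t) (map (\<lambda>Z. (A,Aq,Z,0::nat)) W)"
      unfolding W_def using walk_adj[OF tA tAq tC tC'] .
    have a1: "e3c_adj r s t u (A,B,C,1)" unfolding u_def using tA tB tC by (intro adj_layer) auto
    have a2: "e3c_adj r s t (A,B,C,1) (A,Aq,C,1)" using tA tAq tB tC dA by (intro adj_B) auto
    have a3: "e3c_adj r s t (A,Aq,C,1) (A,Aq,C,0)" using tA tAq tC by (intro adj_layer) auto
    have a4: "e3c_adj r s t (A,Aq,C',0) (A,Aq,C',1)" using tA tAq tC' by (intro adj_layer) auto
    have a5: "e3c_adj r s t (A,Aq,C',1) v" unfolding v_def using tA tAq tB tC' dA by (intro adj_B) auto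
    have "successively (e3c_adj r s t) Q"
      unfolding Q_def using w a1 a2 a3 a4 a5 lCC unfolding W_def by (simp add: successively_append_iff successively_Cons hd_append)
    moreover have "distinct Q" unfolding Q_def u_def v_def using dW AqA CC CC2 WC by (auto simp: distinct_map)
    moreover have "hd Q = u" "last Q = v" unfolding Q_def by simp_all
    moreover have "length Q \<ge> 2" unfolding Q_def by simp
    ultimately show "e3c_path r s t u v Q" by (intro path_intro) auto
    show "path_len Q \<le> t + 6" unfolding path_len_def Q_def using lenW by simp
  qed
  have Ql: "lab x = (i0,e0)" if "x \<in> set Q" "x \<noteq> u" "x \<noteq> v" for x
    using that AqA labAq unfolding Q_def lab_def by auto
  have Qn: "\<exists>x\<in>set Q. x \<noteq> u \<and> x \<noteq> v"
    unfolding Q_def u_def v_def using CC by force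

  have Rp: "e3c_path r s t u v R \<and> path_len R \<le> t + 6"
  proof
    have w: "successively (e3c_adj r s t) (map (\<lambda>Z. (Br,B,Z,0::nat)) W)"
      unfolding W_def using walk_adj[OF tBr tB tC tC'] .
    have a1: "e3c_adj r s t u (A,B,C,2)" unfolding u_def using tA tB tC by (intro adj_layer) auto
    have a2: "e3c_adj r s t (A,B,C,2) (Br,B,C,2)" using tA tBr tB tC dB by (intro adj_A) auto
    have a3: "e3c_adj r s t (Br,B,C,2) (Br,B,C,0)" using tBr tB tC by (intro adj_layer) auto
    have a4: "e3c_adj r s t (Br,B,C',0) (Br,B,C',2)" using tBr tB tC' by (intro adj_layer) auto
    have a5: "e3c_adj r s t (Br,B,C',2) (A,B,C',2)" using tA tBr tB tC' dB by (intro adj_A) auto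
    have a6: "e3c_adj r s t (A,B,C',2) v" unfolding v_def using tA tB tC' by (intro adj_layer) auto
    have "successively (e3c_adj r s t) R"
      unfolding R_def using w a1 a2 a3 a4 a5 a6 lCC unfolding W_def by (simp add: successively_append_iff successively_Cons hd_append)
    moreover have "distinct R" unfolding R_def u_def v_def using dW BrB CC CC2 WC by (auto simp: distinct_map)
    moreover have "hd R = u" "last R = v" unfolding R_def by simp_all
    moreover have "length R \<ge> 2" unfolding R_def by simp
    ultimately show "e3c_path r s t u v R" by (intro path_intro) auto
    show "path_len R \<le> t + 6" unfolding path_len_def R_def using lenW by simp
  qed
  have Rl: "lab x = (0,3)" if "x \<in> set R" "x \<noteq> u" "x \<noteq> v" for x
    using that BrB unfolding R_def lab_def by auto
  have Rn: "\<exists>x\<in>set R. x \<noteq> u \<and> x \<noteq> v"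
    unfolding R_def u_def v_def by force

  have Pall: "(e3c_path r s t u v (Pp i e) \<and> path_len (Pp i e) \<le> t + 6) \<and>
      (\<forall>x\<in>set (Pp i e). x \<noteq> u \<longrightarrow> x \<noteq> v \<longrightarrow> lab x = (i,e)) \<and>
      (\<exists>x\<in>set (Pp i e). x \<noteq> u \<and> x \<noteq> v)"
    if ie: "i < r" "e = 1 \<or> e = 2" "(i,e) \<noteq> (i0,e0)" for i e
  proof -
    define Ck where "Ck = off C i e"
    define Ak where "Ak = off B i e"
    define Wk where "Wk = cw Ck C'"
    have it: "i < t" "i < s" using ie rt r1 by auto
    have tCk: "tern_str t Ck" unfolding Ck_def using tC by (rule tern_off)
    have tAk: "tern_str s Ak" unfolding Ak_def using tB by (rule tern_off)
    have lCk: "length Ck = length C'" using tCk tC' tern_len by metis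
    have CkC: "Ck \<noteq> C" "C \<noteq> Ck" unfolding Ck_def using off_ne[OF tC it(1) ie(2)] by auto
    have AkA: "Ak \<noteq> B" "B \<noteq> Ak" unfolding Ak_def using off_ne[OF tB it(2) ie(2)] by auto
    have CkW: "Ck \<notin> set W" unfolding Ck_def W_def using cf[OF ie(1,2)] ie(3) by blast
    have CkC': "Ck \<noteq> C'" "C' \<noteq> Ck" using CkW WC by auto
    have dAk: "differ_one B Ak" "differ_one Ak B" unfolding Ak_def using differ_one_off[OF tB it(2) ie(2)]
      by (auto intro: differ_one_sym)
    have dCk: "differ_one C Ck" unfolding Ck_def using differ_one_off[OF tC it(1) ie(2)] .
    have labAk: "idxOf B Ak = (i,e)" unfolding Ak_def using idxOf_off[OF tB it(2) ie(2)] .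
    have labCk: "idxOf C Ck = (i,e)" unfolding Ck_def using idxOf_off[OF tC it(1) ie(2)] .
    have PP: "Pp i e = [u, (A,B,Ck,0), (A,B,Ck,1), (A,Ak,Ck,1)]
      @ map (\<lambda>Z. (A,Ak,Z,0::nat)) Wk @ [(A,Ak,C',1), v]"
      unfolding Pp_def Ck_def Ak_def Wk_def by simp
    have lenWk: "length Wk \<le> t + 1" unfolding Wk_def using cw_len2[OF tCk] .
    have dWk: "distinct Wk" unfolding Wk_def by (rule cw_distinct)
    have p1: "e3c_path r s t u v (Pp i e)"
    proof -
      have w: "successively (e3c_adj r s t) (map (\<lambda>Z. (A,Ak,Z,0::nat)) Wk)"
        unfolding Wk_def using walk_adj[OF tA tAk tCk tC'] .
      have a1: "e3c_adj r s t u (A,B,Ck,0)" unfolding u_def using tA tB tC tCk dCk by (intro adj_C) auto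
      have a2: "e3c_adj r s t (A,B,Ck,0) (A,B,Ck,1)" using tA tB tCk by (intro adj_layer) auto
      have a3: "e3c_adj r s t (A,B,Ck,1) (A,Ak,Ck,1)" using tA tAk tB tCk dAk by (intro adj_B) auto
      have a4: "e3c_adj r s t (A,Ak,Ck,1) (A,Ak,Ck,0)" using tA tAk tCk by (intro adj_layer) auto
      have a5: "e3c_adj r s t (A,Ak,C',0) (A,Ak,C',1)" using tA tAk tC' by (intro adj_layer) auto
      have a6: "e3c_adj r s t (A,Ak,C',1) v" unfolding v_def using tA tAk tB tC' dAk by (intro adj_B) auto
      have "successively (e3c_adj r s t) (Pp i e)"
        unfolding PP using w a1 a2 a3 a4 a5 a6 lCk unfolding Wk_def by (simp add: successively_append_iff successively_Cons hd_append)
      moreover have "distinct (Pp i e)" unfolding PP u_def v_def using dWk AkA CkC CkC' CC CC2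
        by (auto simp: distinct_map)
      moreover have "hd (Pp i e) = u" "last (Pp i e) = v" unfolding PP by simp_all
      moreover have "length (Pp i e) \<ge> 2" unfolding PP by simp
      ultimately show ?thesis by (intro path_intro) auto
    qed
    have p2: "path_len (Pp i e) \<le> t + 6" unfolding path_len_def PP using lenWk by simp
    have p3: "\<forall>x\<in>set (Pp i e). x \<noteq> u \<longrightarrow> x \<noteq> v \<longrightarrow> lab x = (i,e)"
      unfolding PP lab_def using AkA CkC CkW labAk labCk by auto
    have p4: "\<exists>x\<in>set (Pp i e). x \<noteq> u \<and> x \<noteq> v"
      unfolding PP u_def v_def using CkC by force
    show ?thesis using p1 p2 p3 p4 by blast
  qed
  have k0s: "(i0,e0) \<in> set (idxs r)" using k0 by (auto simp: set_idxs)
  have rem: "set (remove1 (i0,e0) (idxs r)) = set (idxs r) - {(i0,e0)}"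
    using distinct_idxs by (rule set_remove1_eq)
  have dks: "distinct ks" unfolding ks_def using rem k0 distinct_idxs
    by (auto simp: set_idxs)
  have lks: "length ks = 2*r+2" unfolding ks_def using k0s r1 by (simp add: length_remove1 length_idxs)
  have main: "internally_disjoint u v (map pth ks) \<and>
     (\<forall>p\<in>set (map pth ks). e3c_path r s t u v p \<and> path_len p \<le> t+6)"
  proof (rule family[where lab = lab])
    show "distinct ks" by (rule dks)
  next
    fix k assume k: "k \<in> set ks"
    show "e3c_path r s t u v (pth k) \<and> path_len (pth k) \<le> t + 6"
    proof -
      consider "k = (0,0)" | "k = (0,3)" | "k = (i0,e0)" | "k \<in> set (idxs r)" "k \<noteq> (i0,e0)"
        using k rem unfolding ks_def by auto
      then show ?thesis
      proof cases
        case 4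
        then obtain i e where "k = (i,e)" "i < r" "e = 1 \<or> e = 2" "(i,e) \<noteq> (i0,e0)" by (auto simp: set_idxs)
        then show ?thesis using Pall[of i e] unfolding pth_def by auto
      qed (use E1p Rp Qp k0 in \<open>auto simp: pth_def\<close>)
    qed
  next
    fix k x assume k: "k \<in> set ks" and x: "x \<in> set (pth k)" "x \<noteq> u" "x \<noteq> v"
    consider "k = (0,0)" | "k = (0,3)" | "k = (i0,e0)" | "k \<in> set (idxs r)" "k \<noteq> (i0,e0)"
      using k rem unfolding ks_def by auto
    then show "lab x = k"
    proof cases
      case 1 then show ?thesis using E1l x unfolding pth_def by auto
    next
      case 2 then show ?thesis using Rl x unfolding pth_def by auto
    next
      case 3
      then have "pth k = Q" using k0 unfolding pth_def by auto
      then show ?thesis using Ql[of x] x 3 by simp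
    next
      case 4
      then obtain i e where "k = (i,e)" "i < r" "e = 1 \<or> e = 2" "(i,e) \<noteq> (i0,e0)" by (auto simp: set_idxs)
      then show ?thesis using Pall[of i e] x unfolding pth_def by auto
    qed
  next
    fix k assume k: "k \<in> set ks"
    consider "k = (0,0)" | "k = (0,3)" | "k = (i0,e0)" | "k \<in> set (idxs r)" "k \<noteq> (i0,e0)"
      using k rem unfolding ks_def by auto
    then show "\<exists>x\<in>set (pth k). x \<noteq> u \<and> x \<noteq> v"
    proof cases
      case 4
      then obtain i e where "k = (i,e)" "i < r" "e = 1 \<or> e = 2" "(i,e) \<noteq> (i0,e0)" by (auto simp: set_idxs)
      then show ?thesis using Pall[of i e] unfolding pth_def by auto
    qed (use E1n Rn Qn k0 in \<open>auto simp: pth_def\<close>)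
  qed
  show ?thesis using main lks unfolding u_def v_def by (intro exI[of _ "map pth ks"]) simp
qed




lemma case12:
  fixes A B C C' :: "nat list"
  assumes r1: "1 \<le> r" "r \<le> s" "s \<le> t"
    and tA: "tern_str r A" and tB: "tern_str s B" and tC: "tern_str t C" and tC': "tern_str t C'"
    and CC: "C \<noteq> C'"
  shows "\<exists>ps. length ps = 2*r+2 \<and> internally_disjoint (A,B,C,1) (A,B,C',2) ps \<and>
     (\<forall>p\<in>set ps. e3c_path r s t (A,B,C,1) (A,B,C',2) p \<and> path_len p \<le> t+8)"
proof -
  define u where "u = (A,B,C,1::nat)"
  define v where "v = (A,B,C',2::nat)"
  define W where "W = cw C C'"
  define Aq where "Aq = off A 0 1"
  define Br where "Br = off B 0 1"
  define E1 where "E1 = [u] @ map (\<lambda>Z. (A,B,Z,0::nat)) W @ [v]"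
  define Q where "Q = [u, (A,B,C,2), (Aq,B,C,2)] @ map (\<lambda>Z. (Aq,B,Z,0::nat)) W @ [(Aq,B,C',2), v]"
  define R where "R = [u, (A,Br,C,1)] @ map (\<lambda>Z. (A,Br,Z,0::nat)) W @ [(A,Br,C',1), (A,B,C',1), v]"
  define Pp where "Pp = (\<lambda>i e. [u, (A,off B i e,C,1)] @ map (\<lambda>Z. (A,off B i e,Z,0::nat)) W @
     [(A,off B i e,C',2), (off A i e,off B i e,C',2), (off A i e,off B i e,C',1), (off A i e,B,C',1),
      (off A i e,B,C',2), v])"
  define pth where "pth = (\<lambda>k. if k = (0,0) then E1 else if k = (0,3) then Q else if k = (0,1) then R
      else Pp (fst k) (snd k))"
  define ks where "ks = (0,0) # (0,3) # (0,1) # remove1 (0,1) (idxs r)"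
  define lab :: "e3vert \<Rightarrow> nat \<times> nat" where "lab = (\<lambda>(X,Y,Z,d). if X \<noteq> A then
      (if Y \<noteq> B then idxOf B Y else if X = Aq then (0,3) else idxOf A X)
      else if Y \<noteq> B then idxOf B Y else if d = 0 then (0,0) else if d = 2 then (0,3) else (0,1))"
  have lC: "length C = t" "length C' = t" using tC tC' tern_len by auto
  have lCC: "length C = length C'" using lC by simp
  have rt: "r \<le> t" "0 < r" "0 < s" using r1 by auto
  have e1: "(1::nat) = 1 \<or> (1::nat) = 2" by simp
  have tAq: "tern_str r Aq" unfolding Aq_def using tA by (rule tern_off)
  have tBr: "tern_str s Br" unfolding Br_def using tB by (rule tern_off)
  have AqA: "Aq \<noteq> A" "A \<noteq> Aq" unfolding Aq_def using off_ne[OF tA rt(2) e1] by auto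
  have BrB: "Br \<noteq> B" "B \<noteq> Br" unfolding Br_def using off_ne[OF tB rt(3) e1] by auto
  have dA: "differ_one A Aq" "differ_one Aq A" unfolding Aq_def using differ_one_off[OF tA rt(2) e1]
    by (auto intro: differ_one_sym)
  have dB: "differ_one B Br" "differ_one Br B" unfolding Br_def using differ_one_off[OF tB rt(3) e1]
    by (auto intro: differ_one_sym)
  have CC2: "C' \<noteq> C" using CC by simp
  have WC: "C \<in> set W" "C' \<in> set W" unfolding W_def using C_in_cw[OF lCC] C'_in_cw[OF lCC] by auto
  have lenW: "length W \<le> t + 1" unfolding W_def using cw_len2[OF tC] .
  have dW: "distinct W" unfolding W_def by (rule cw_distinct)
  have labBr: "idxOf B Br = (0,1)" unfolding Br_def using idxOf_off[OF tB rt(3) e1] .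

  have E1p: "e3c_path r s t u v E1 \<and> path_len E1 \<le> t + 8"
  proof
    have w: "successively (e3c_adj r s t) (map (\<lambda>Z. (A,B,Z,0::nat)) W)"
      unfolding W_def using walk_adj[OF tA tB tC tC'] .
    have a1: "e3c_adj r s t u (A,B,C,0)" unfolding u_def using tA tB tC by (intro adj_layer) auto
    have a2: "e3c_adj r s t (A,B,C',0) v" unfolding v_def using tA tB tC' by (intro adj_layer) auto
    have "successively (e3c_adj r s t) E1"
      unfolding E1_def using w a1 a2 lCC unfolding W_def by (simp add: successively_append_iff successively_Cons hd_append)
    moreover have "distinct E1" unfolding E1_def u_def v_def using dW by (auto simp: distinct_map)
    moreover have "hd E1 = u" "last E1 = v" unfolding E1_def by simp_all
    moreover have "length E1 \<ge> 2" unfolding E1_def by simp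
    ultimately show "e3c_path r s t u v E1" by (intro path_intro) auto
    show "path_len E1 \<le> t + 8" unfolding path_len_def E1_def using lenW by simp
  qed
  have E1l: "lab x = (0,0)" if "x \<in> set E1" "x \<noteq> u" "x \<noteq> v" for x
    using that unfolding E1_def lab_def by auto
  have E1n: "\<exists>x\<in>set E1. x \<noteq> u \<and> x \<noteq> v"
    using WC unfolding E1_def u_def v_def by force

  have Qp: "e3c_path r s t u v Q \<and> path_len Q \<le> t + 8"
  proof
    have w: "successively (e3c_adj r s t) (map (\<lambda>Z. (Aq,B,Z,0::nat)) W)"
      unfolding W_def using walk_adj[OF tAq tB tC tC'] .
    have a1: "e3c_adj r s t u (A,B,C,2)" unfolding u_def using tA tB tC by (intro adj_layer) auto
    have a2: "e3c_adj r s t (A,B,C,2) (Aq,B,C,2)" using tA tAq tB tC dA by (intro adj_A) auto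
    have a3: "e3c_adj r s t (Aq,B,C,2) (Aq,B,C,0)" using tAq tB tC by (intro adj_layer) auto
    have a4: "e3c_adj r s t (Aq,B,C',0) (Aq,B,C',2)" using tAq tB tC' by (intro adj_layer) auto
    have a5: "e3c_adj r s t (Aq,B,C',2) v" unfolding v_def using tA tAq tB tC' dA by (intro adj_A) auto
    have "successively (e3c_adj r s t) Q"
      unfolding Q_def using w a1 a2 a3 a4 a5 lCC unfolding W_def by (simp add: successively_append_iff successively_Cons hd_append)
    moreover have "distinct Q" unfolding Q_def u_def v_def using dW AqA CC CC2 WC by (auto simp: distinct_map)
    moreover have "hd Q = u" "last Q = v" unfolding Q_def by simp_all
    moreover have "length Q \<ge> 2" unfolding Q_def by simp
    ultimately show "e3c_path r s t u v Q" by (intro path_intro) auto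
    show "path_len Q \<le> t + 8" unfolding path_len_def Q_def using lenW by simp
  qed
  have Ql: "lab x = (0,3)" if "x \<in> set Q" "x \<noteq> u" "x \<noteq> v" for x
    using that AqA unfolding Q_def lab_def by auto
  have Qn: "\<exists>x\<in>set Q. x \<noteq> u \<and> x \<noteq> v"
    unfolding Q_def u_def v_def using CC by force

  have Rp: "e3c_path r s t u v R \<and> path_len R \<le> t + 8"
  proof
    have w: "successively (e3c_adj r s t) (map (\<lambda>Z. (A,Br,Z,0::nat)) W)"
      unfolding W_def using walk_adj[OF tA tBr tC tC'] .
    have a2: "e3c_adj r s t u (A,Br,C,1)" unfolding u_def using tA tBr tB tC dB by (intro adj_B) auto
    have a3: "e3c_adj r s t (A,Br,C,1) (A,Br,C,0)" using tA tBr tC by (intro adj_layer) auto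
    have a4: "e3c_adj r s t (A,Br,C',0) (A,Br,C',1)" using tA tBr tC' by (intro adj_layer) auto
    have a5: "e3c_adj r s t (A,Br,C',1) (A,B,C',1)" using tA tBr tB tC' dB by (intro adj_B) auto
    have a6: "e3c_adj r s t (A,B,C',1) v" unfolding v_def using tA tB tC' by (intro adj_layer) auto
    have "successively (e3c_adj r s t) R"
      unfolding R_def using w a2 a3 a4 a5 a6 lCC unfolding W_def by (simp add: successively_append_iff successively_Cons hd_append)
    moreover have "distinct R" unfolding R_def u_def v_def using dW BrB CC CC2 WC by (auto simp: distinct_map)
    moreover have "hd R = u" "last R = v" unfolding R_def by simp_all
    moreover have "length R \<ge> 2" unfolding R_def by simp
    ultimately show "e3c_path r s t u v R" by (intro path_intro) auto
    show "path_len R \<le> t + 8" unfolding path_len_def R_def using lenW by simp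
  qed
  have Rl: "lab x = (0,1)" if "x \<in> set R" "x \<noteq> u" "x \<noteq> v" for x
    using that BrB labBr unfolding R_def lab_def by auto
  have Rn: "\<exists>x\<in>set R. x \<noteq> u \<and> x \<noteq> v"
    unfolding R_def u_def v_def using BrB by force

  have Pall: "(e3c_path r s t u v (Pp i e) \<and> path_len (Pp i e) \<le> t + 8) \<and>
      (\<forall>x\<in>set (Pp i e). x \<noteq> u \<longrightarrow> x \<noteq> v \<longrightarrow> lab x = (i,e)) \<and>
      (\<exists>x\<in>set (Pp i e). x \<noteq> u \<and> x \<noteq> v)"
    if ie: "i < r" "e = 1 \<or> e = 2" "(i,e) \<noteq> (0,1)" for i e
  proof -
    define Ak where "Ak = off A i e"
    define Bk where "Bk = off B i e"
    have it: "i < s" using ie rt r1 by auto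
    have tAk: "tern_str r Ak" unfolding Ak_def using tA by (rule tern_off)
    have tBk: "tern_str s Bk" unfolding Bk_def using tB by (rule tern_off)
    have AkA: "Ak \<noteq> A" "A \<noteq> Ak" unfolding Ak_def using off_ne[OF tA ie(1,2)] by auto
    have BkB: "Bk \<noteq> B" "B \<noteq> Bk" unfolding Bk_def using off_ne[OF tB it ie(2)] by auto
    have AkAq: "Ak \<noteq> Aq" unfolding Ak_def Aq_def using off_inj[OF tA ie(1,2) rt(2) e1] ie(3) by auto
    have dAk: "differ_one A Ak" "differ_one Ak A" unfolding Ak_def using differ_one_off[OF tA ie(1,2)]
      by (auto intro: differ_one_sym)
    have dBk: "differ_one B Bk" "differ_one Bk B" unfolding Bk_def using differ_one_off[OF tB it ie(2)]
      by (auto intro: differ_one_sym)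
    have labAk: "idxOf A Ak = (i,e)" unfolding Ak_def using idxOf_off[OF tA ie(1,2)] .
    have labBk: "idxOf B Bk = (i,e)" unfolding Bk_def using idxOf_off[OF tB it ie(2)] .
    have PP: "Pp i e = [u, (A,Bk,C,1)] @ map (\<lambda>Z. (A,Bk,Z,0::nat)) W @
     [(A,Bk,C',2), (Ak,Bk,C',2), (Ak,Bk,C',1), (Ak,B,C',1), (Ak,B,C',2), v]"
      unfolding Pp_def Ak_def Bk_def by simp
    have p1: "e3c_path r s t u v (Pp i e)"
    proof -
      have w: "successively (e3c_adj r s t) (map (\<lambda>Z. (A,Bk,Z,0::nat)) W)"
        unfolding W_def using walk_adj[OF tA tBk tC tC'] .
      have a1: "e3c_adj r s t u (A,Bk,C,1)" unfolding u_def using tA tB tC tBk dBk by (intro adj_B) auto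
      have a2: "e3c_adj r s t (A,Bk,C,1) (A,Bk,C,0)" using tA tBk tC by (intro adj_layer) auto
      have a3: "e3c_adj r s t (A,Bk,C',0) (A,Bk,C',2)" using tA tBk tC' by (intro adj_layer) auto
      have a4: "e3c_adj r s t (A,Bk,C',2) (Ak,Bk,C',2)" using tA tAk tBk tC' dAk by (intro adj_A) auto
      have a5: "e3c_adj r s t (Ak,Bk,C',2) (Ak,Bk,C',1)" using tAk tBk tC' by (intro adj_layer) auto
      have a6: "e3c_adj r s t (Ak,Bk,C',1) (Ak,B,C',1)" using tAk tBk tB tC' dBk by (intro adj_B) auto
      have a7: "e3c_adj r s t (Ak,B,C',1) (Ak,B,C',2)" using tAk tB tC' by (intro adj_layer) auto
      have a8: "e3c_adj r s t (Ak,B,C',2) v" unfolding v_def using tA tAk tB tC' dAk by (intro adj_A) auto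
      have "successively (e3c_adj r s t) (Pp i e)"
        unfolding PP using w a1 a2 a3 a4 a5 a6 a7 a8 lCC unfolding W_def
        by (simp add: successively_append_iff successively_Cons hd_append)
      moreover have "distinct (Pp i e)" unfolding PP u_def v_def using dW AkA BkB CC CC2
        by (auto simp: distinct_map)
      moreover have "hd (Pp i e) = u" "last (Pp i e) = v" unfolding PP by simp_all
      moreover have "length (Pp i e) \<ge> 2" unfolding PP by simp
      ultimately show ?thesis by (intro path_intro) auto
    qed
    have p2: "path_len (Pp i e) \<le> t + 8" unfolding path_len_def PP using lenW by simp
    have p3: "\<forall>x\<in>set (Pp i e). x \<noteq> u \<longrightarrow> x \<noteq> v \<longrightarrow> lab x = (i,e)"
      unfolding PP lab_def using AkA BkB AkAq labAk labBk by auto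
    have p4: "\<exists>x\<in>set (Pp i e). x \<noteq> u \<and> x \<noteq> v"
      unfolding PP u_def v_def using BkB by force
    show ?thesis using p1 p2 p3 p4 by blast
  qed
  have k0s: "(0,1) \<in> set (idxs r)" using rt by (auto simp: set_idxs)
  have rem: "set (remove1 (0,1) (idxs r)) = set (idxs r) - {(0,1)}"
    using distinct_idxs by (rule set_remove1_eq)
  have dks: "distinct ks" unfolding ks_def using rem distinct_idxs
    by (auto simp: set_idxs)
  have lks: "length ks = 2*r+2" unfolding ks_def using k0s r1 by (simp add: length_remove1 length_idxs)
  have main: "internally_disjoint u v (map pth ks) \<and>
     (\<forall>p\<in>set (map pth ks). e3c_path r s t u v p \<and> path_len p \<le> t+8)"
  proof (rule family[where lab = lab])
    show "distinct ks" by (rule dks)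
  next
    fix k assume k: "k \<in> set ks"
    show "e3c_path r s t u v (pth k) \<and> path_len (pth k) \<le> t + 8"
    proof -
      consider "k = (0,0)" | "k = (0,3)" | "k = (0,1)" | "k \<in> set (idxs r)" "k \<noteq> (0,1)"
        using k rem unfolding ks_def by auto
      then show ?thesis
      proof cases
        case 4
        then have "\<exists>i e. k = (i,e)" by simp
        then obtain i e where ke: "k = (i,e)" by blast
        have "i < r" "e = 1 \<or> e = 2" "(i,e) \<noteq> (0,1)" using 4 ke by (simp_all add: set_idxs)
        note ie = ke this
        show ?thesis using ie Pall[of i e] unfolding pth_def by auto
      qed (use E1p Rp Qp in \<open>auto simp: pth_def\<close>)
    qed
  next
    fix k x assume k: "k \<in> set ks" and x: "x \<in> set (pth k)" "x \<noteq> u" "x \<noteq> v"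
    consider "k = (0,0)" | "k = (0,3)" | "k = (0,1)" | "k \<in> set (idxs r)" "k \<noteq> (0,1)"
      using k rem unfolding ks_def by auto
    then show "lab x = k"
    proof cases
      case 1 then show ?thesis using E1l x unfolding pth_def by auto
    next
      case 2 then show ?thesis using Ql x unfolding pth_def by auto
    next
      case 3
      then have "pth k = R" unfolding pth_def by auto
      then show ?thesis using Rl[of x] x 3 by simp
    next
      case 4
      then have "\<exists>i e. k = (i,e)" by simp
        then obtain i e where ke: "k = (i,e)" by blast
        have "i < r" "e = 1 \<or> e = 2" "(i,e) \<noteq> (0,1)" using 4 ke by (simp_all add: set_idxs)
        note ie = ke this
      show ?thesis using ie Pall[of i e] x unfolding pth_def by auto
    qed
  next
    fix k assume k: "k \<in> set ks"
    consider "k = (0,0)" | "k = (0,3)" | "k = (0,1)" | "k \<in> set (idxs r)" "k \<noteq> (0,1)"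
      using k rem unfolding ks_def by auto
    then show "\<exists>x\<in>set (pth k). x \<noteq> u \<and> x \<noteq> v"
    proof cases
      case 4
      then have "\<exists>i e. k = (i,e)" by simp
        then obtain i e where ke: "k = (i,e)" by blast
        have "i < r" "e = 1 \<or> e = 2" "(i,e) \<noteq> (0,1)" using 4 ke by (simp_all add: set_idxs)
        note ie = ke this
      show ?thesis using ie Pall[of i e] unfolding pth_def by auto
    qed (use E1n Rn Qn in \<open>auto simp: pth_def\<close>)
  qed
  show ?thesis using main lks unfolding u_def v_def by (intro exI[of _ "map pth ks"]) simp
qed



lemma k0_exists:
  assumes "1 \<le> r" "r \<le> t" "tern_str t C" "tern_str t C'"
  shows "\<exists>i0 e0. i0 < r \<and> (e0 = 1 \<or> e0 = 2) \<and>
    (\<forall>i e. i < r \<longrightarrow> (e = 1 \<or> e = 2) \<longrightarrow> off C i e \<in> set (cw C C') \<longrightarrow> i = i0 \<and> e = e0)"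
proof (cases "\<exists>i e. i < r \<and> (e = 1 \<or> e = 2) \<and> off C i e \<in> set (cw C C')")
  case False
  then show ?thesis using assms(1) by (intro exI[of _ 0] exI[of _ 1]) auto
next
  case True
  then obtain i0 e0 where h0: "i0 < r" "e0 = 1 \<or> e0 = 2" "off C i0 e0 \<in> set (cw C C')" by blast
  have lC: "length C = t" "length C' = t" using assms tern_len by auto
  have info: "C' ! i = (C ! i + e) mod 3 \<and> (\<forall>j. i < j \<and> j < t \<longrightarrow> C ! j = C' ! j) \<and> (C ! i + e) mod 3 \<noteq> C ! i
     \<and> C ! i < 3"
    if "i < r" "e = 1 \<or> e = 2" "off C i e \<in> set (cw C C')" for i e
  proof -
    have it: "i < t" using that assms by simp
    have ci: "C ! i < 3" using tern_nth[OF assms(3) it] .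
    have ne: "(C ! i + e) mod 3 \<noteq> C ! i" using off_neq_nth[OF ci that(2)] .
    have "C' ! i = (C ! i + e) mod 3 \<and> (\<forall>j. i < j \<and> j < length C \<longrightarrow> C ! j = C' ! j)"
      using cw_conflict[of i C C' "(C ! i + e) mod 3"] it lC ne that(3) unfolding off_def by simp
    then show ?thesis using ne ci lC by simp
  qed
  have "i = i0 \<and> e = e0" if h: "i < r" "e = 1 \<or> e = 2" "off C i e \<in> set (cw C C')" for i e
  proof -
    note a = info[OF h] and b = info[OF h0]
    have "\<not> i < i0"
    proof
      assume "i < i0"
      then have "C ! i0 = C' ! i0" using a h0(1) assms(2) by simp
      then show False using b by simp
    qed
    moreover have "\<not> i0 < i"
    proof
      assume "i0 < i"
      then have "C ! i = C' ! i" using b h(1) assms(2) by simp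
      then show False using a by simp
    qed
    ultimately have ii: "i = i0" by simp
    then have "(C ! i + e) mod 3 = (C ! i + e0) mod 3" using a b by simp
    then have "((C ! i + e) mod 3 + 3 - C ! i) mod 3 = ((C ! i + e0) mod 3 + 3 - C ! i) mod 3" by simp
    then have "e = e0" using mod3b[of "C ! i" e] mod3b[of "C ! i" e0] a h(2) h0(2) by simp
    then show ?thesis using ii by simp
  qed
  then show ?thesis using h0 by blast
qed

lemma swap_paths:
  assumes "\<exists>ps. length ps = n \<and> internally_disjoint u v ps \<and> (\<forall>p\<in>set ps. e3c_path r s t u v p \<and> path_len p \<le> L)"
  shows "\<exists>ps. length ps = n \<and> internally_disjoint v u ps \<and> (\<forall>p\<in>set ps. e3c_path r s t v u p \<and> path_len p \<le> L)"
proof -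
  obtain ps where ps: "length ps = n" "internally_disjoint u v ps" "\<forall>p\<in>set ps. e3c_path r s t u v p \<and> path_len p \<le> L"
    using assms by blast
  have "internally_disjoint v u (map rev ps)"
    using ps(2) unfolding internally_disjoint_def by (auto simp: distinct_map inj_on_def)
  moreover have "\<forall>p\<in>set (map rev ps). e3c_path r s t v u p \<and> path_len p \<le> L"
    using ps(3) path_rev unfolding path_len_def by auto
  ultimately show ?thesis using ps(1) by (intro exI[of _ "map rev ps"]) simp
qed

theorem lemma15:
  fixes r s t :: nat and A B C C' :: "nat list" and d d' :: nat
  assumes "1 \<le> r" and "r \<le> s" and "s \<le> t"
    and "e3c_vert r s t (A, B, C, d)" and "e3c_vert r s t (A, B, C', d')"
    and "C \<noteq> C'" and "d \<noteq> d'"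
  shows "\<exists>ps :: e3vert list list. length ps = 2 * r + 2 \<and>
           internally_disjoint (A, B, C, d) (A, B, C', d') ps \<and>
           (\<forall>p\<in>set ps. e3c_path r s t (A, B, C, d) (A, B, C', d') p \<and>
              path_len p \<le> (if {d, d'} = {1, 2} then t + 8 else t + 6))"
proof -
  have tA: "tern_str r A" and tB: "tern_str s B" and tC: "tern_str t C" and tC': "tern_str t C'"
    and dd: "d < 3" "d' < 3"
    using assms(4,5) by auto
  have rt: "r \<le> t" using assms by simp
  have CC2: "C' \<noteq> C" using assms(6) by simp
  obtain i0 e0 where k: "i0 < r" "e0 = 1 \<or> e0 = 2"
    "\<And>i e. i < r \<Longrightarrow> e = 1 \<or> e = 2 \<Longrightarrow> off C i e \<in> set (cw C C') \<Longrightarrow> i = i0 \<and> e = e0"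
    using k0_exists[OF assms(1) rt tC tC'] by blast
  obtain i1 e1 where k': "i1 < r" "e1 = 1 \<or> e1 = 2"
    "\<And>i e. i < r \<Longrightarrow> e = 1 \<or> e = 2 \<Longrightarrow> off C' i e \<in> set (cw C' C) \<Longrightarrow> i = i1 \<and> e = e1"
    using k0_exists[OF assms(1) rt tC' tC] by blast
  have n01: "{0::nat, 1} \<noteq> {1, 2}" "{0::nat, 2} \<noteq> {1, 2}" "{1::nat, 0} \<noteq> {1, 2}" "{2::nat, 0} \<noteq> {1, 2}"
    by (auto simp: insert_eq_iff doubleton_eq_iff)
  have n12: "{2::nat, 1} = {1, 2}" by auto
  consider "d = 0" "d' = 1" | "d = 0" "d' = 2" | "d = 1" "d' = 2" | "d = 1" "d' = 0" | "d = 2" "d' = 0"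
    | "d = 2" "d' = 1"
    using dd assms(7) by linarith
  then show ?thesis
  proof cases
    case 1
    then show ?thesis using case01[OF assms(1-3) tA tB tC tC' assms(6) k] n01 by simp
  next
    case 2
    then show ?thesis using case02[OF assms(1-3) tA tB tC tC' assms(6) k] n01 by simp
  next
    case 3
    then show ?thesis using case12[OF assms(1-3) tA tB tC tC' assms(6)] by simp
  next
    case 4
    then show ?thesis using swap_paths[OF case01[OF assms(1-3) tA tB tC' tC CC2 k']] n01 by simp
  next
    case 5
    then show ?thesis using swap_paths[OF case02[OF assms(1-3) tA tB tC' tC CC2 k']] n01 by simp
  next
    case 6
    then show ?thesis using swap_paths[OF case12[OF assms(1-3) tA tB tC' tC CC2]] n12 by simp
  qed
qed

end
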